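(* Let $k,\ell,m$ be integers with $k>\ell\ge1$ and $m\ge1$, and let $w=a^kba^\ell b^m$. For $n\ge1$ let $S_n = a^kba^\ell a^{k}b a^{\ell}b^{m} (a^k b^{m+1}a^\ell)^n a^{k}b a^{\ell}b^{m} b^m$. Then every $S_n$ belongs to $L^{\epsilon}_{\vdash_{\{w\}}}$ and for all $1\le i<j$, $S_i\not\vdash^*_{\{w\}} S_j$; in particular $\vdash^*_{\{w\}}$ is not a well quasi-order on $L^{\epsilon}_{\vdash_{\{w\}}}$.
   Context: For words $u,v$, the shuffle $u \sqcup\!\sqcup v$ is the set of all words $u_1v_1\cdots u_kv_k$ with $k\ge 1$, $u=u_1\cdots u_k$, $v=v_1\cdots v_k$ (pieces possibly empty). For a finite set $I$ of words, $v \vdash_I w$ means $w \in v \sqcup\!\sqcup u$ for some $u\in I$; $\vdash_I^*$ is its reflexive-transitive closure and $L^{\epsilon}_{\vdash_I}=\{w : \epsilon \vdash_I^* w\}$. A quasi-order $\le$ on $S$ is a well quasi-order iff every infinite sequence $s_1,s_2,\dots$ in $S$ has $i<j$ with $s_i\le s_j$. *)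

theory Defs
  imports Main
begin

definition shuffle :: "'a list \<Rightarrow> 'a list \<Rightarrow> 'a list set" where
  "shuffle u v = {w. \<exists>us vs. length us = length vs \<and> length us \<ge> 1 \<and>
      u = concat us \<and> v = concat vs \<and> w = concat (map2 (@) us vs)}"

definition ins_step :: "'a list set \<Rightarrow> 'a list \<Rightarrow> 'a list \<Rightarrow> bool" where
  "ins_step I v w \<longleftrightarrow> (\<exists>u\<in>I. w \<in> shuffle v u)"

abbreviation ins_star :: "'a list set \<Rightarrow> 'a list \<Rightarrow> 'a list \<Rightarrow> bool" where
  "ins_star I \<equiv> (ins_step I)\<^sup>*\<^sup>*"

definition lang_eps :: "'a list set \<Rightarrow> 'a list set" where
  "lang_eps I = {w. ins_star I [] w}"

text \<open>Well quasi-order on a set S (relation assumed a quasi-order): every infinite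
  sequence in S has i < j with s i <= s j.\<close>
definition wqo_on_set :: "('b \<Rightarrow> 'b \<Rightarrow> bool) \<Rightarrow> 'b set \<Rightarrow> bool" where
  "wqo_on_set le S \<longleftrightarrow> (\<forall>s::nat \<Rightarrow> 'b. (\<forall>n. s n \<in> S) \<longrightarrow> (\<exists>i j. i < j \<and> le (s i) (s j)))"

end

theory Submission
  imports Defs
begin

inductive il :: "'a list \<Rightarrow> 'a list \<Rightarrow> 'a list \<Rightarrow> bool" where
  il_nil: "il [] [] []"
| il_l: "il xs ys zs \<Longrightarrow> il (x#xs) ys (x#zs)"
| il_r: "il xs ys zs \<Longrightarrow> il xs (y#ys) (y#zs)"

lemma il_Nil_left: "il [] ys ys"
  by (induction ys) (auto intro: il.intros)

lemma il_Nil_right: "il xs [] xs"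
  by (induction xs) (auto intro: il.intros)

lemma il_app_l: "il xs ys zs \<Longrightarrow> il (u@xs) ys (u@zs)"
  by (induction u) (auto intro: il.intros)

lemma il_app_r: "il xs ys zs \<Longrightarrow> il xs (u@ys) (u@zs)"
  by (induction u) (auto intro: il.intros)

lemma il_to_shuffle: "il u v z \<Longrightarrow> z \<in> shuffle u v"
proof (induction rule: il.induct)
  case il_nil
  show ?case unfolding shuffle_def
    by (rule CollectI, rule exI[of _ "[[]]"], rule exI[of _ "[[]]"]) simp
next
  case (il_l xs ys zs x)
  then obtain us vs where h: "length us = length vs" "length us \<ge> 1" "xs = concat us"
    "ys = concat vs" "zs = concat (map2 (@) us vs)" unfolding shuffle_def by blast
  then obtain u1 us' where u: "us = u1 # us'" by (cases us) auto
  with h obtain v1 vs' where v: "vs = v1 # vs'" by (cases vs) auto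
  show ?case unfolding shuffle_def
    by (rule CollectI, rule exI[of _ "(x#u1)#us'"], rule exI[of _ "vs"]) (use h u v in simp)
next
  case (il_r xs ys zs y)
  then obtain us vs where h: "length us = length vs" "length us \<ge> 1" "xs = concat us"
    "ys = concat vs" "zs = concat (map2 (@) us vs)" unfolding shuffle_def by blast
  show ?case unfolding shuffle_def
    by (rule CollectI, rule exI[of _ "[]#us"], rule exI[of _ "[y]#vs"]) (use h in simp)
qed

lemma il_concat: "length us = length vs \<Longrightarrow> il (concat us) (concat vs) (concat (map2 (@) us vs))"
proof (induction us arbitrary: vs)
  case Nil
  then show ?case by (simp add: il_nil)
next
  case (Cons u us)
  then obtain v vs' where "vs = v # vs'" by (cases vs) auto
  with Cons show ?case by (simp add: il_app_l il_app_r)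
qed

lemma shuffle_to_il: "z \<in> shuffle u v \<Longrightarrow> il u v z"
  unfolding shuffle_def using il_concat by blast

lemma ins_step_il: "ins_step {w} v u \<longleftrightarrow> il v w u"
  unfolding ins_step_def using il_to_shuffle shuffle_to_il by blast

lemma il_Nil_r_eq: "il xs ys zs \<Longrightarrow> ys = [] \<Longrightarrow> zs = xs"
  by (induction rule: il.induct) auto

lemma il_Nil_l_eq: "il xs ys zs \<Longrightarrow> xs = [] \<Longrightarrow> zs = ys"
  by (induction rule: il.induct) auto

lemma il_filter: "il xs ys zs \<Longrightarrow> il (filter P xs) (filter P ys) (filter P zs)"
  by (induction rule: il.induct) (auto intro: il.intros)

lemma il_set: "il xs ys zs \<Longrightarrow> set zs = set xs \<union> set ys"
  by (induction rule: il.induct) auto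

lemma il_lift: "il xs ys zs \<Longrightarrow> map f xs' = xs \<Longrightarrow> map f ys' = ys \<Longrightarrow>
   \<exists>zs'. map f zs' = zs \<and> il xs' ys' zs'"
proof (induction arbitrary: xs' ys' rule: il.induct)
  case il_nil
  then show ?case by (auto intro: il.intros)
next
  case (il_l xs ys zs x)
  then obtain x' xs'' where "xs' = x' # xs''" "f x' = x" "map f xs'' = xs" by (auto simp: Cons_eq_map_conv)
  moreover from il_l.IH[of xs'' ys'] il_l.prems this obtain zs' where "map f zs' = zs" "il xs'' ys' zs'" by auto
  ultimately show ?case by (intro exI[of _ "x'#zs'"]) (auto intro: il.intros)
next
  case (il_r xs ys zs y)
  then obtain y' ys'' where "ys' = y' # ys''" "f y' = y" "map f ys'' = ys" by (auto simp: Cons_eq_map_conv)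
  moreover from il_r.IH[of xs' ys''] il_r.prems this obtain zs' where "map f zs' = zs" "il xs' ys'' zs'" by auto
  ultimately show ?case by (intro exI[of _ "y'#zs'"]) (auto intro: il.intros)
qed

lemma il_Cons_inv: "il A B (x#C) \<Longrightarrow> (\<exists>A'. A = x#A' \<and> il A' B C) \<or> (\<exists>B'. B = x#B' \<and> il A B' C)"
  by (cases rule: il.cases) auto

lemma il_Nil_inv: "il A B [] \<Longrightarrow> A = [] \<and> B = []"
  by (erule il.cases) auto

lemma il_assoc: "il C D E \<Longrightarrow> il A B C \<Longrightarrow> \<exists>F. il B D F \<and> il A F E"
proof (induction arbitrary: A B rule: il.induct)
  case il_nil
  then show ?case using il_Nil_inv by (auto intro: il.intros)
next
  case (il_l xs ys zs x)
  from il_Cons_inv[OF il_l.prems] show ?case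
  proof
    assume "\<exists>A'. A = x#A' \<and> il A' B xs"
    then obtain A' where "A = x#A'" "il A' B xs" by blast
    with il_l.IH[of A' B] show ?case by (auto intro: il.intros)
  next
    assume "\<exists>B'. B = x#B' \<and> il A B' xs"
    then obtain B' where "B = x#B'" "il A B' xs" by blast
    with il_l.IH[of A B'] show ?case by (auto intro: il.intros)
  qed
next
  case (il_r xs ys zs y)
  from il_r.IH[OF il_r.prems] obtain F where "il B ys F" "il A F zs" by blast
  then show ?case by (intro exI[of _ "y#F"]) (auto intro: il.intros)
qed

lemma star_decomp: "ins_star {w} v u \<Longrightarrow> \<exists>x. ins_star {w} [] x \<and> il v x u"
proof (induction rule: rtranclp_induct)
  case base
  then show ?case using il_Nil_right by blast
next
  case (step u u')
  then obtain x where x: "ins_star {w} [] x" "il v x u" by blast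
  from step(2) have "il u w u'" by (simp add: ins_step_il)
  from il_assoc[OF this x(2)] obtain F where "il x w F" "il v F u'" by blast
  moreover have "ins_star {w} [] F"
    using x(1) \<open>il x w F\<close> by (simp add: ins_step_il rtranclp.rtrancl_into_rtrancl)
  ultimately show ?case by blast
qed

definition proj :: "nat \<Rightarrow> ('a \<times> nat) list \<Rightarrow> 'a list" where
  "proj c cs = map fst (filter (\<lambda>p. snd p = c) cs)"

definition colored :: "'a list \<Rightarrow> nat \<Rightarrow> ('a \<times> nat) list \<Rightarrow> bool" where
  "colored w N cs \<longleftrightarrow> (\<forall>p\<in>set cs. snd p < N) \<and> (\<forall>c<N. proj c cs = w)"

lemma proj_append[simp]: "proj c (xs @ ys) = proj c xs @ proj c ys"
  by (simp add: proj_def)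

lemma L_colored: "ins_star {w} [] y \<Longrightarrow> \<exists>N cs. map fst cs = y \<and> colored w N cs"
proof (induction rule: rtranclp_induct)
  case base
  show ?case by (rule exI[of _ 0], rule exI[of _ "[]"]) (simp add: colored_def)
next
  case (step y y')
  then obtain N cs where cs: "map fst cs = y" "colored w N cs" by blast
  from step(2) have il1: "il y w y'" by (simp add: ins_step_il)
  define cw where "cw = map (\<lambda>x. (x, N)) w"
  have "map fst cw = w" by (simp add: cw_def comp_def)
  from il_lift[OF il1 cs(1) this] obtain zs where zs: "map fst zs = y'" "il cs cw zs" by blast
  have "colored w (Suc N) zs"
    unfolding colored_def
  proof (intro conjI allI impI ballI)
    fix p assume "p \<in> set zs"
    with il_set[OF zs(2)] cs(2) show "snd p < Suc N" by (auto simp: colored_def cw_def)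
  next
    fix c assume c: "c < Suc N"
    have f: "il (filter (\<lambda>p. snd p = c) cs) (filter (\<lambda>p. snd p = c) cw) (filter (\<lambda>p. snd p = c) zs)"
      by (rule il_filter[OF zs(2)])
    show "proj c zs = w"
    proof (cases "c < N")
      case True
      then have "filter (\<lambda>p. snd p = c) cw = []" by (auto simp: cw_def filter_empty_conv)
      from il_Nil_r_eq[OF f this] True cs(2) show ?thesis by (simp add: proj_def colored_def)
    next
      case False
      with c have cN: "c = N" by simp
      have "filter (\<lambda>p. snd p = c) cs = []" using cs(2) cN by (auto simp: colored_def filter_empty_conv)
      from il_Nil_l_eq[OF f this] cN show ?thesis
        by (simp add: proj_def cw_def comp_def)
    qed
  qed
  with zs show ?case by blast
qed

lemma combine_col:
  assumes "il v x u" "map fst c1 = v" "colored w N1 c1" "map fst c2 = x" "colored w N2 c2"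
  shows "\<exists>cs. map fst cs = u \<and> colored w (N1+N2) cs \<and> map fst (filter (\<lambda>p. snd p < N1) cs) = v"
proof -
  define c2' where "c2' = map (\<lambda>p. (fst p, snd p + N1)) c2"
  have "map fst c2' = x" using assms(4) by (simp add: c2'_def comp_def)
  from il_lift[OF assms(1) assms(2) this] obtain cs where cs: "map fst cs = u" "il c1 c2' cs" by blast
  have col: "colored w (N1+N2) cs"
    unfolding colored_def
  proof (intro conjI allI impI ballI)
    fix p assume "p \<in> set cs"
    with il_set[OF cs(2)] have "p \<in> set c1 \<or> p \<in> set c2'" by auto
    then show "snd p < N1 + N2"
    proof
      assume "p \<in> set c1" with assms(3) show ?thesis by (auto simp: colored_def)
    next
      assume "p \<in> set c2'"
      then obtain q where "q \<in> set c2" "p = (fst q, snd q + N1)" by (auto simp: c2'_def)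
      with assms(5) show ?thesis by (auto simp: colored_def)
    qed
  next
    fix c assume c: "c < N1 + N2"
    have f: "il (filter (\<lambda>p. snd p = c) c1) (filter (\<lambda>p. snd p = c) c2') (filter (\<lambda>p. snd p = c) cs)"
      by (rule il_filter[OF cs(2)])
    show "proj c cs = w"
    proof (cases "c < N1")
      case True
      then have "filter (\<lambda>p. snd p = c) c2' = []" by (auto simp: c2'_def filter_empty_conv)
      from il_Nil_r_eq[OF f this] True assms(3) show ?thesis by (simp add: proj_def colored_def)
    next
      case False
      have "filter (\<lambda>p. snd p = c) c1 = []" using assms(3) False by (auto simp: colored_def filter_empty_conv)
      from il_Nil_l_eq[OF f this] have "proj c cs = map fst (filter (\<lambda>p. snd p = c) c2')"
        by (simp add: proj_def)
      also have "\<dots> = proj (c - N1) c2"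
      proof -
        have eq: "\<And>p::'a \<times> nat. (snd p + N1 = c) = (snd p = c - N1)" using False by auto
        show ?thesis unfolding c2'_def proj_def by (simp add: filter_map comp_def eq)
      qed
      also have "\<dots> = w" using assms(5) False c by (simp add: colored_def)
      finally show ?thesis .
    qed
  qed
  have f2: "il (filter (\<lambda>p. snd p < N1) c1) (filter (\<lambda>p. snd p < N1) c2') (filter (\<lambda>p. snd p < N1) cs)"
    by (rule il_filter[OF cs(2)])
  have "filter (\<lambda>p. snd p < N1) c2' = []" by (auto simp: c2'_def filter_empty_conv)
  from il_Nil_r_eq[OF f2 this] have "filter (\<lambda>p. snd p < N1) cs = c1"
    using assms(3) by (simp add: colored_def)
  with cs col assms(2) show ?thesis by auto
qed


definition cnt :: "'a \<Rightarrow> 'a list \<Rightarrow> nat" where "cnt x xs = length (filter (\<lambda>y. y = x) xs)"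

lemma cnt_simps[simp]: "cnt x [] = 0" "cnt x (y#ys) = (if y = x then Suc (cnt x ys) else cnt x ys)"
  "cnt x (xs @ ys) = cnt x xs + cnt x ys" "cnt x (replicate n y) = (if y = x then n else 0)"
  by (auto simp: cnt_def)

lemma cnt_concat_rep[simp]: "cnt x (concat (replicate t xs)) = t * cnt x xs"
  by (induction t) auto

lemma cnt_sum: "\<forall>p\<in>set cs. snd p < N \<Longrightarrow> cnt x (map fst cs) = (\<Sum>c<N. cnt x (proj c cs))"
proof (induction cs)
  case Nil
  show ?case by (simp add: proj_def)
next
  case (Cons p cs)
  have "(\<Sum>c<N. cnt x (proj c (p#cs))) = (\<Sum>c<N. (if fst p = x then (if c = snd p then 1 else 0) else 0) + cnt x (proj c cs))"
    by (rule sum.cong) (auto simp: proj_def)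
  also have "\<dots> = (\<Sum>c<N. (if fst p = x then (if c = snd p then 1 else 0) else 0)) + (\<Sum>c<N. cnt x (proj c cs))"
    by (rule sum.distrib)
  also have "(\<Sum>c<N. (if fst p = x then (if c = snd p then 1 else 0) else 0::nat)) = (if fst p = x then 1 else 0)"
    using Cons.prems by (cases "fst p = x") auto
  finally show ?case using Cons by auto
qed

lemma sum_eq_pointwise:
  fixes f g :: "nat \<Rightarrow> nat"
  assumes "finite A" "\<forall>x\<in>A. f x \<le> g x" "sum g A \<le> sum f A"
  shows "\<forall>x\<in>A. f x = g x"
proof (rule ccontr)
  assume "\<not> (\<forall>x\<in>A. f x = g x)"
  then have "\<exists>x\<in>A. f x < g x" using assms(2) by (auto simp: order.order_iff_strict)
  from sum_strict_mono_ex1[OF assms(1,2) this] assms(3) show False by simp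
qed

lemma sum_indicator_card: "finite A \<Longrightarrow> (\<Sum>x\<in>A. if P x then 1 else (0::nat)) = card {x\<in>A. P x}"
  by (simp add: sum.If_cases Int_def)

lemma arith_AB:
  fixes A B t k l m :: nat
  assumes h1: "(t+1)*(k+l)+l \<le> (k+l)*A + l*B" and h2: "(m+1)*A + m*B \<le> (t+1)*(m+1)+m"
    and "l<k" "1\<le>l" "1\<le>m"
  shows "A = t+1 \<and> B = 1"
proof -
  have A1: "A \<le> t+1"
  proof (rule ccontr)
    assume "\<not> A \<le> t+1"
    then have "t+2 \<le> A" by simp
    then have "(m+1)*(t+2) \<le> (m+1)*A" by (rule mult_le_mono2)
    then have "(m+1)*(t+1) + (m+1) \<le> (m+1)*A" by (simp add: distrib_left)
    with h2 show False by (simp add: mult.commute)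
  qed
  have A2: "t+1 \<le> A"
  proof (rule ccontr)
    assume "\<not> t+1 \<le> A"
    define D where "D = t+1-A"
    have D: "t+1 = A + D" "1 \<le> D" using \<open>\<not> t+1 \<le> A\<close> by (simp_all add: D_def)
    have "(A+D)*(k+l)+l \<le> (k+l)*A + l*B" using h1 unfolding D(1) .
    then have e1: "D*(k+l) + l \<le> l*B" by (simp add: distrib_right mult.commute)
    have "(m+1)*A + m*B \<le> (A+D)*(m+1)+m" using h2 unfolding D(1) .
    then have e2: "m*B \<le> D*(m+1) + m" by (simp add: algebra_simps)
    have "m*(D*(k+l) + l) \<le> m*(l*B)" using e1 by (rule mult_le_mono2)
    also have "\<dots> = l*(m*B)" by simp
    also have "\<dots> \<le> l*(D*(m+1) + m)" using e2 by (rule mult_le_mono2)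
    finally have "m*(D*(k+l) + l) \<le> l*(D*(m+1) + m)" .
    then have "m*D*k + m*D*l + m*l \<le> l*D*m + l*D + l*m" by (simp add: distrib_left distrib_right mult.assoc mult.left_commute)
    then have "D*(m*k) \<le> D*l" by (simp add: mult.commute mult.left_commute)
    with D(2) have "m*k \<le> l" by simp
    moreover have "k \<le> m*k" using assms(5) by simp
    ultimately show False using assms(3) by simp
  qed
  from A1 A2 have A: "A = t+1" by simp
  with h1 have "l*1 \<le> l*B" by (simp add: mult.commute)
  with assms(4) have "1 \<le> B" by simp
  moreover from A h2 have "m*B \<le> m*1" by (simp add: distrib_left distrib_right mult.commute)
  with assms(5) have "B \<le> 1" by simp
  ultimately show ?thesis using A by simp
qed

lemma rep_last: "0 < n \<Longrightarrow> replicate n x = replicate (n-1) x @ [x]"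
  by (cases n) (simp_all add: replicate_append_same)

lemma last_eq: "xs @ [x] @ zs = ys @ [y] @ zs \<Longrightarrow> x = y"
proof -
  assume "xs @ [x] @ zs = ys @ [y] @ zs"
  then have "(xs @ [x]) @ zs = (ys @ [y]) @ zs" by simp
  then have "xs @ [x] = ys @ [y]" by simp
  then show "x = y" by simp
qed

lemma proj_nonempty: "p \<in> set xs \<Longrightarrow> proj (snd p) xs \<noteq> []"
  by (auto simp: proj_def filter_empty_conv)

lemma two_color:
  "\<forall>p\<in>set xs. snd p = c1 \<or> snd p = c2 \<Longrightarrow> c1 \<noteq> c2 \<Longrightarrow>
   map fst (filter (\<lambda>p. Q (snd p)) xs) =
     (if Q c1 then (if Q c2 then map fst xs else proj c1 xs) else (if Q c2 then proj c2 xs else []))"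
  by (induction xs) (auto simp: proj_def)


locale P3 =
  fixes a b :: 'x and k l m :: nat
  assumes ab: "a \<noteq> b" and kl: "l < k" and l1: "1 \<le> l" and m1: "1 \<le> m"
begin

definition W where "W = replicate k a @ [b] @ replicate l a @ replicate m b"
definition M where "M = replicate k a @ replicate (m+1) b @ replicate l a"
definition Pt where "Pt = replicate l a @ replicate m b"
definition Blk where "Blk = replicate (k+l) a @ replicate (m+1) b"
definition Z where "Z t = replicate l a @ concat (replicate t M) @ W @ replicate m b"
definition Hd where "Hd r = replicate k a @ [b] @ replicate l a @
                 replicate k a @ [b] @ replicate l a @ replicate m b @ concat (replicate r M)"
definition SS where "SS n = replicate k a @ [b] @ replicate l a @
                 replicate k a @ [b] @ replicate l a @ replicate m b @
                 concat (replicate n (replicate k a @ replicate (m+1) b @ replicate l a)) @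
                 replicate k a @ [b] @ replicate l a @ replicate m b @ replicate m b"

lemma rep_lk: "replicate l a @ replicate k a @ xs = replicate (k+l) a @ xs"
  by (metis append_assoc replicate_add add.commute)

lemma Z_Suc: "Z (Suc t) = Blk @ Z t"
  unfolding Z_def Blk_def by (simp add: M_def rep_lk)

lemma SS_split: "t < n \<Longrightarrow> SS n = Hd (n - Suc t) @ replicate k a @ replicate (m+1) b @ Z t"
proof -
  assume "t < n"
  then have "replicate n M = replicate (n - Suc t) M @ replicate (Suc t) M"
    by (metis Suc_leI le_add_diff_inverse2 replicate_add)
  then have "concat (replicate n M) = concat (replicate (n - Suc t) M) @ M @ concat (replicate t M)"
    by simp
  then show ?thesis unfolding SS_def Hd_def Z_def W_def by (simp add: M_def[symmetric] M_def)
qed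

lemma len_SS: "length (SS n) = 3*(k+l+m+1) + n*(k+l+m+1)"
  unfolding SS_def by (simp add: length_concat sum_list_replicate)

lemma len_Z: "length (Z t) = k+2*l+2*m+1 + t*(k+l+m+1)"
  unfolding Z_def W_def M_def by (simp add: length_concat sum_list_replicate)

lemma cnt_Z: "cnt a (Z t) = (t+1)*(k+l)+l" "cnt b (Z t) = (t+1)*(m+1)+m"
  unfolding Z_def W_def M_def using ab by (auto simp: algebra_simps)

lemma SS_end: "\<exists>V. SS n = V @ [b] @ replicate m b"
proof -
  define X where "X = replicate k a @ [b] @ replicate l a @
                 replicate k a @ [b] @ replicate l a @ replicate m b @
                 concat (replicate n (replicate k a @ replicate (m+1) b @ replicate l a)) @
                 replicate k a @ [b] @ replicate l a"
  have e: "SS n = X @ replicate m b @ replicate m b" by (simp add: SS_def X_def)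
  have r: "replicate (m-1) b @ [b] = replicate m b" using rep_last[of m b] m1 by simp
  have "(X @ replicate (m-1) b) @ [b] @ replicate m b = X @ (replicate (m-1) b @ [b]) @ replicate m b" by simp
  with e r have "SS n = (X @ replicate (m-1) b) @ [b] @ replicate m b" by simp
  then show ?thesis by blast
qed

lemma k1: "1 \<le> k" using kl l1 by simp

lemma W_alt: "W = (replicate k a @ [b] @ replicate (l-1) a) @ [a] @ replicate m b"
  using rep_last[of l a] l1 by (simp add: W_def)

lemma Pt_alt: "Pt = replicate (l-1) a @ [a] @ replicate m b"
  using rep_last[of l a] l1 by (simp add: Pt_def)

lemma s1: "SS n \<noteq> U @ W"
proof
  assume h: "SS n = U @ W"
  obtain V where "SS n = V @ [b] @ replicate m b" using SS_end by blast
  with h W_alt have "V @ [b] @ replicate m b = (U @ replicate k a @ [b] @ replicate (l-1) a) @ [a] @ replicate m b"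
    by simp
  from last_eq[OF this] ab show False by simp
qed

lemma s2: "SS n \<noteq> U @ Pt"
proof
  assume h: "SS n = U @ Pt"
  obtain V where "SS n = V @ [b] @ replicate m b" using SS_end by blast
  with h Pt_alt have "V @ [b] @ replicate m b = (U @ replicate (l-1) a) @ [a] @ replicate m b"
    by simp
  from last_eq[OF this] ab show False by simp
qed

lemma s3: "t < n \<Longrightarrow> SS n \<noteq> U @ replicate k a @ [b] @ Z t"
proof
  assume t: "t < n" and h: "SS n = U @ replicate k a @ [b] @ Z t"
  have rb: "replicate (m+1) b = replicate (m-1) b @ [b] @ [b]"
    using rep_last[of m b] m1 by (simp add: replicate_append_same[symmetric])
  have ra: "replicate k a = replicate (k-1) a @ [a]" using rep_last[of k a] k1 by simp
  from SS_split[OF t] rb have eq1: "SS n = (Hd (n - Suc t) @ replicate k a @ replicate (m-1) b) @ [b] @ ([b] @ Z t)"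
    by simp
  have eq2: "U @ replicate k a @ [b] @ Z t = (U @ replicate (k-1) a) @ [a] @ ([b] @ Z t)"
    by (subst ra) simp
  have "(Hd (n - Suc t) @ replicate k a @ replicate (m-1) b) @ [b] @ ([b] @ Z t) = SS n" by (rule eq1[symmetric])
  also have "\<dots> = U @ replicate k a @ [b] @ Z t" by (rule h)
  also have "\<dots> = (U @ replicate (k-1) a) @ [a] @ ([b] @ Z t)" by (rule eq2)
  finally have "(Hd (n - Suc t) @ replicate k a @ replicate (m-1) b) @ [b] @ ([b] @ Z t) = (U @ replicate (k-1) a) @ [a] @ ([b] @ Z t)" .
  from last_eq[OF this] ab show False by simp
qed

lemma s4: "1 \<le> n \<Longrightarrow> SS n \<noteq> U @ Z n"
proof
  assume n: "1 \<le> n" and h: "SS n = U @ Z n"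
  have t: "n - 1 < n" using n by simp
  have sn: "Suc (n-1) = n" using n by simp
  have rb: "replicate m b = replicate (m-1) b @ [b]" using rep_last[of m b] m1 by simp
  have ra: "replicate l a = replicate (l-1) a @ [a]" using rep_last[of l a] l1 by simp
  define Y where "Y = replicate k a @ [b] @ replicate l a @ replicate k a @ [b] @ replicate l a @ replicate (m-1) b"
  have hd: "Hd 0 = Y @ [b]" unfolding Hd_def Y_def using rb by simp
  from SS_split[OF t] sn hd have eq1: "SS n = Y @ [b] @ (replicate k a @ replicate (m+1) b @ Z (n-1))"
    by simp
  have "Z n = replicate (k+l) a @ replicate (m+1) b @ Z (n-1)"
    using Z_Suc[of "n-1"] sn by (simp add: Blk_def)
  also have "\<dots> = replicate l a @ replicate k a @ replicate (m+1) b @ Z (n-1)" by (rule rep_lk[symmetric])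
  finally have eq2: "U @ Z n = (U @ replicate (l-1) a) @ [a] @ (replicate k a @ replicate (m+1) b @ Z (n-1))"
    by (subst (asm) ra) simp
  have "Y @ [b] @ (replicate k a @ replicate (m+1) b @ Z (n-1)) = SS n" by (rule eq1[symmetric])
  also have "\<dots> = U @ Z n" by (rule h)
  also have "\<dots> = (U @ replicate (l-1) a) @ [a] @ (replicate k a @ replicate (m+1) b @ Z (n-1))" by (rule eq2)
  finally have "Y @ [b] @ (replicate k a @ replicate (m+1) b @ Z (n-1)) = (U @ replicate (l-1) a) @ [a] @ (replicate k a @ replicate (m+1) b @ Z (n-1))" .
  from last_eq[OF this] ab show False by simp
qed

definition FA where "FA ys = (if cnt b ys = m+1 then 1 else 0::nat)"
definition PB where "PB ys = (if cnt b ys = m \<and> 1 \<le> cnt a ys then 1 else 0::nat)"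

lemma W_suffix:
  assumes "W = xs @ ys"
  shows "cnt a ys \<le> (k+l)*FA ys + l*PB ys \<and> (m+1)*FA ys + m*PB ys \<le> cnt b ys \<and>
    (cnt a ys = (k+l)*FA ys + l*PB ys \<longrightarrow> cnt b ys = (m+1)*FA ys + m*PB ys \<longrightarrow> ys = W \<or> ys = Pt \<or> ys = [])"
proof -
  define n where "n = length xs"
  have ys: "ys = drop n W" using assms by (simp add: n_def)
  consider (c1) "n \<le> k" | (c2) d where "n = k+1+d" "d \<le> l" | (c3) e where "n = k+1+l+e" "1 \<le> e"
  proof -
    have "n \<le> k \<or> (\<exists>d. n = k+1+d \<and> d \<le> l) \<or> (\<exists>e. n = k+1+l+e \<and> 1 \<le> e)" by presburger
    then show ?thesis using that by blast
  qed
  then show ?thesis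
  proof cases
    case c1
    then have y: "ys = replicate (k-n) a @ [b] @ replicate l a @ replicate m b" by (simp add: ys W_def)
    have ca: "cnt a ys = k - n + l" and cb: "cnt b ys = m+1" using ab by (auto simp: y)
    have "FA ys = 1" "PB ys = 0" by (auto simp: FA_def PB_def cb)
    moreover have "k - n + l = k + l \<Longrightarrow> ys = W" using c1 by (simp add: y W_def)
    ultimately show ?thesis using ca cb by auto
  next
    case c2
    then have y: "ys = replicate (l-d) a @ replicate m b" by (simp add: ys W_def)
    have ca: "cnt a ys = l - d" and cb: "cnt b ys = m" using ab by (auto simp: y)
    have fa: "FA ys = 0" by (auto simp: FA_def cb)
    show ?thesis
    proof (cases "d < l")
      case True
      then have "PB ys = 1" by (auto simp: PB_def ca cb)
      moreover have "l - d = l \<Longrightarrow> ys = Pt" using True by (simp add: y Pt_def)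
      ultimately show ?thesis using ca cb fa by auto
    next
      case False
      then have "PB ys = 0" using c2 by (auto simp: PB_def ca cb)
      then show ?thesis using ca cb fa m1 False c2 by auto
    qed
  next
    case c3
    then have y: "ys = replicate (m - e) b" by (simp add: ys W_def)
    have ca: "cnt a ys = 0" and cb: "cnt b ys = m - e" using ab by (auto simp: y)
    have "FA ys = 0" "PB ys = 0" using c3 m1 by (auto simp: FA_def PB_def cb ca)
    moreover have "m - e = 0 \<Longrightarrow> ys = []" by (simp add: y)
    ultimately show ?thesis using ca cb by auto
  qed
qed

lemma noW: "map fst xs = replicate x a @ replicate y b \<Longrightarrow> proj c xs \<noteq> W"
proof
  assume h: "map fst xs = replicate x a @ replicate y b" and p: "proj c xs = W"
  from h obtain xs1 xs2 where xs: "xs = xs1 @ xs2" "map fst xs1 = replicate x a" "map fst xs2 = replicate y b"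
    by (metis map_eq_append_conv)
  have "\<forall>z\<in>set (proj c xs1). z = a" using xs(2) unfolding proj_def
    by (auto dest!: arg_cong[where f=set]) (metis (no_types, lifting) empty_iff fst_conv image_eqI in_set_replicate)
  then have p1: "proj c xs1 = replicate (length (proj c xs1)) a" by (simp add: replicate_length_same)
  have "\<forall>z\<in>set (proj c xs2). z = b" using xs(3) unfolding proj_def
    by (auto dest!: arg_cong[where f=set]) (metis (no_types, lifting) empty_iff fst_conv image_eqI in_set_replicate)
  then have p2: "proj c xs2 = replicate (length (proj c xs2)) b" by (simp add: replicate_length_same)
  define u where "u = length (proj c xs1)"
  define v where "v = length (proj c xs2)"
  have e: "replicate u a @ replicate v b = W" using p p1 p2 xs(1) by (simp add: u_def v_def)
  have "W ! k = b" by (simp add: W_def nth_append)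
  moreover have "W ! (k+1) = a" using l1 by (simp add: W_def nth_append)
  moreover have "k + 1 < length W" using l1 by (simp add: W_def)
  ultimately have lt: "k+1 < u + v" and wk: "W ! k = b" and wk1: "W ! (k+1) = a" using e by (auto dest: arg_cong[where f=length])
  have uk: "u \<le> k"
  proof (rule ccontr)
    assume "\<not> u \<le> k"
    then have "(replicate u a @ replicate v b) ! k = a" by (simp add: nth_append)
    with e wk ab show False by simp
  qed
  then have "(replicate u a @ replicate v b) ! (k+1) = b" using lt by (simp add: nth_append)
  with e wk1 ab show False by simp
qed

lemma FA_PB_vals: "FA W = 1" "PB W = 0" "FA Pt = 0" "PB Pt = 1" "FA [] = 0" "PB [] = 0"
  using ab l1 m1 by (auto simp: FA_def PB_def W_def Pt_def)

lemma W_ne: "W \<noteq> Pt" "W \<noteq> []" "Pt \<noteq> []"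
  using l1 by (auto simp: W_def Pt_def)

lemma len_W_Pt: "length Pt < length W"
  by (simp add: W_def Pt_def)

lemma rigid:
  assumes "map fst cs = Z t" "\<forall>p\<in>set cs. snd p < N" "\<forall>c<N. \<exists>xs. W = xs @ proj c cs"
  shows "(\<forall>c<N. proj c cs = [] \<or> proj c cs = W \<or> proj c cs = Pt) \<and>
         card {c. c<N \<and> proj c cs = Pt} = 1 \<and> card {c. c<N \<and> proj c cs = W} = t+1"
proof -
  define \<sigma> where "\<sigma> c = proj c cs" for c
  have suf: "cnt a (\<sigma> c) \<le> (k+l)*FA (\<sigma> c) + l*PB (\<sigma> c) \<and> (m+1)*FA (\<sigma> c) + m*PB (\<sigma> c) \<le> cnt b (\<sigma> c) \<and>
    (cnt a (\<sigma> c) = (k+l)*FA (\<sigma> c) + l*PB (\<sigma> c) \<longrightarrow> cnt b (\<sigma> c) = (m+1)*FA (\<sigma> c) + m*PB (\<sigma> c) \<longrightarrow>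
       \<sigma> c = W \<or> \<sigma> c = Pt \<or> \<sigma> c = [])" if "c < N" for c
    using assms(3) that W_suffix unfolding \<sigma>_def by blast
  have sa: "(\<Sum>c<N. cnt a (\<sigma> c)) = (t+1)*(k+l)+l"
    using cnt_sum[OF assms(2), of a] assms(1) cnt_Z by (simp add: \<sigma>_def)
  have sb: "(\<Sum>c<N. cnt b (\<sigma> c)) = (t+1)*(m+1)+m"
    using cnt_sum[OF assms(2), of b] assms(1) cnt_Z by (simp add: \<sigma>_def)
  define A where "A = (\<Sum>c<N. FA (\<sigma> c))"
  define B where "B = (\<Sum>c<N. PB (\<sigma> c))"
  have sg1: "(\<Sum>c<N. (k+l)*FA (\<sigma> c) + l*PB (\<sigma> c)) = (k+l)*A + l*B"
    by (simp add: A_def B_def sum.distrib sum_distrib_left)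
  have sg2: "(\<Sum>c<N. (m+1)*FA (\<sigma> c) + m*PB (\<sigma> c)) = (m+1)*A + m*B"
    by (simp add: A_def B_def sum.distrib sum_distrib_left)
  have i1: "(\<Sum>c<N. cnt a (\<sigma> c)) \<le> (k+l)*A + l*B"
    unfolding sg1[symmetric] by (rule sum_mono) (use suf in auto)
  have i2: "(m+1)*A + m*B \<le> (\<Sum>c<N. cnt b (\<sigma> c))"
    unfolding sg2[symmetric] by (rule sum_mono) (use suf in auto)
  from arith_AB[OF i1[unfolded sa] i2[unfolded sb] kl l1 m1] have AB: "A = t+1" "B = 1" by auto
  have e1: "\<forall>c\<in>{..<N}. cnt a (\<sigma> c) = (k+l)*FA (\<sigma> c) + l*PB (\<sigma> c)"
    by (rule sum_eq_pointwise) (use suf sa AB sg1 in auto)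
  have e2: "\<forall>c\<in>{..<N}. (m+1)*FA (\<sigma> c) + m*PB (\<sigma> c) = cnt b (\<sigma> c)"
    by (rule sum_eq_pointwise) (use suf sb AB sg2 in auto)
  have cls: "\<forall>c<N. \<sigma> c = [] \<or> \<sigma> c = W \<or> \<sigma> c = Pt"
    using suf e1 e2 by fastforce
  have "B = (\<Sum>c<N. if \<sigma> c = Pt then 1 else 0)"
    unfolding B_def by (rule sum.cong) (use cls FA_PB_vals W_ne in auto)
  also have "\<dots> = card {c\<in>{..<N}. \<sigma> c = Pt}" by (rule sum_indicator_card) simp
  finally have c1: "card {c. c<N \<and> \<sigma> c = Pt} = 1" using AB by (simp add: lessThan_def)
  have "A = (\<Sum>c<N. if \<sigma> c = W then 1 else 0)"
    unfolding A_def by (rule sum.cong) (use cls FA_PB_vals W_ne in auto)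
  also have "\<dots> = card {c\<in>{..<N}. \<sigma> c = W}" by (rule sum_indicator_card) simp
  finally have c2: "card {c. c<N \<and> \<sigma> c = W} = t+1" using AB by (simp add: lessThan_def)
  from cls c1 c2 show ?thesis unfolding \<sigma>_def by blast
qed

lemma main:
  assumes i1: "1 \<le> i" and ij: "i < j" and cs: "map fst cs = SS j" and col: "colored W N cs"
    and cp: "map fst (filter (\<lambda>p. Q (snd p)) cs) = SS i"
  shows False
proof -
  define Cp where "Cp xs = map fst (filter (\<lambda>p. Q (snd p)) xs)" for xs :: "('x \<times> nat) list"
  define L where "L = length cs"
  define cz where "cz t = drop (L - length (Z t)) cs" for t
  have colb: "\<forall>p\<in>set cs. snd p < N" and colp: "\<forall>c<N. proj c cs = W" using col by (auto simp: colored_def)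
  have LS: "L = length (SS j)" using cs unfolding L_def by (metis length_map)
  have lenZ: "length (Z t) \<le> L" if "t < j" for t
    using SS_split[OF that] LS by simp
  have czf: "map fst (cz t) = Z t" if "t < j" for t
  proof -
    have "map fst (cz t) = drop (L - length (Z t)) (SS j)" unfolding cz_def by (metis drop_map cs)
    also have "\<dots> = Z t" using SS_split[OF that] LS by simp
    finally show ?thesis .
  qed
  have split: "cs = take (L - length (Z t)) cs @ cz t" for t by (simp add: cz_def)
  have czb: "\<forall>p\<in>set (cz t). snd p < N" for t using colb by (auto simp: cz_def dest: in_set_dropD)
  have czW: "\<forall>c<N. \<exists>xs. W = xs @ proj c (cz t)" for t
  proof (intro allI impI)
    fix c assume "c < N"
    then have "W = proj c (take (L - length (Z t)) cs) @ proj c (cz t)"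
      using colp split[of t] by (metis proj_append)
    then show "\<exists>xs. W = xs @ proj c (cz t)" by blast
  qed
  have czS: "\<exists>U. SS i = U @ Cp (cz t)" for t
  proof -
    have "SS i = Cp (take (L - length (Z t)) cs) @ Cp (cz t)"
      using cp split[of t] unfolding Cp_def by (metis filter_append map_append)
    then show ?thesis by blast
  qed
  have rig: "(\<forall>c<N. proj c (cz t) = [] \<or> proj c (cz t) = W \<or> proj c (cz t) = Pt) \<and>
      card {c. c<N \<and> proj c (cz t) = Pt} = 1 \<and> card {c. c<N \<and> proj c (cz t) = W} = t+1" if "t < j" for t
    using rigid[OF czf[OF that] czb czW] .
  have blk: "cz (Suc t) = take (length Blk) (cz (Suc t)) @ cz t \<and> map fst (take (length Blk) (cz (Suc t))) = Blk"
    if st: "Suc t < j" for t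
  proof -
    have lz: "length (Z (Suc t)) = length Blk + length (Z t)" by (simp add: Z_Suc)
    have le: "length (Z (Suc t)) \<le> L" using lenZ[OF st] .
    have "drop (length Blk) (cz (Suc t)) = cz t" unfolding cz_def using lz le
      by (simp add: drop_drop)
    then have "cz (Suc t) = take (length Blk) (cz (Suc t)) @ cz t" by (metis append_take_drop_id)
    moreover have "map fst (take (length Blk) (cz (Suc t))) = take (length Blk) (map fst (cz (Suc t)))"
      by (simp add: take_map)
    moreover have "take (length Blk) (map fst (cz (Suc t))) = Blk" using czf[OF st] by (simp add: Z_Suc)
    ultimately show ?thesis by simp
  qed
  define inv where "inv t \<longleftrightarrow> (\<forall>c<N. proj c (cz t) \<noteq> [] \<longrightarrow> \<not> Q c) \<or>
      ((\<forall>c<N. proj c (cz t) \<noteq> [] \<longrightarrow> Q c) \<and> t < i)" for t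
  have out_Cp: "Cp (cz t) = []" if "\<forall>c<N. proj c (cz t) \<noteq> [] \<longrightarrow> \<not> Q c" for t
    unfolding Cp_def using that czb[of t] proj_nonempty by (fastforce simp: filter_empty_conv)
  have in_Cp: "Cp (cz t) = map fst (cz t)" if "\<forall>c<N. proj c (cz t) \<noteq> [] \<longrightarrow> Q c" for t
  proof -
    have "\<forall>x\<in>set (cz t). Q (snd x)" using that czb[of t] proj_nonempty by blast
    then show ?thesis unfolding Cp_def by (simp add: filter_True)
  qed
  have base: "inv 0"
  proof -
    have j0: "0 < j" using ij by simp
    from rig[OF j0] have cl: "\<forall>c<N. proj c (cz 0) = [] \<or> proj c (cz 0) = W \<or> proj c (cz 0) = Pt"
      and cP: "card {c. c<N \<and> proj c (cz 0) = Pt} = 1" and cW: "card {c. c<N \<and> proj c (cz 0) = W} = 1"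
      by auto
    from cW obtain e where eW: "{c. c<N \<and> proj c (cz 0) = W} = {e}" by (auto simp: card_1_singleton_iff)
    from cP obtain p where pP: "{c. c<N \<and> proj c (cz 0) = Pt} = {p}" by (auto simp: card_1_singleton_iff)
    have e: "e < N" "proj e (cz 0) = W" using eW by auto
    have p: "p < N" "proj p (cz 0) = Pt" using pP by auto
    have ep: "e \<noteq> p" using e p W_ne by auto
    have only: "c = e \<or> c = p" if "c < N" "proj c (cz 0) \<noteq> []" for c
    proof -
      from cl that have "proj c (cz 0) = W \<or> proj c (cz 0) = Pt" by blast
      then show ?thesis
      proof
        assume "proj c (cz 0) = W" then have "c \<in> {c. c<N \<and> proj c (cz 0) = W}" using that by simp
        with eW show ?thesis by simp
      next
        assume "proj c (cz 0) = Pt" then have "c \<in> {c. c<N \<and> proj c (cz 0) = Pt}" using that by simp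
        with pP show ?thesis by simp
      qed
    qed
    have two: "\<forall>x\<in>set (cz 0). snd x = e \<or> snd x = p" using only czb proj_nonempty by blast
    note tc = two_color[OF two ep, of Q]
    show "inv 0"
    proof (cases "Q e")
      case Qe: True
      show ?thesis
      proof (cases "Q p")
        case True
        have "\<forall>c<N. proj c (cz 0) \<noteq> [] \<longrightarrow> Q c" using only Qe True by blast
        with i1 show ?thesis unfolding inv_def by simp
      next
        case False
        then have "Cp (cz 0) = W" using tc Qe e by (simp add: Cp_def)
        with czS[of 0] s1 show ?thesis by metis
      qed
    next
      case nQe: False
      show ?thesis
      proof (cases "Q p")
        case True
        then have "Cp (cz 0) = Pt" using tc nQe p by (simp add: Cp_def)
        with czS[of 0] s2 show ?thesis by metis
      next
        case False
        have "\<forall>c<N. proj c (cz 0) \<noteq> [] \<longrightarrow> \<not> Q c" using only nQe False by blast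
        then show ?thesis unfolding inv_def by simp
      qed
    qed
  qed
  have step: "inv (Suc t)" if st: "Suc t < j" and iv: "inv t" for t
  proof -
    have t: "t < j" using st by simp
    from rig[OF t] have cl0: "\<forall>c<N. proj c (cz t) = [] \<or> proj c (cz t) = W \<or> proj c (cz t) = Pt"
      and cP0: "card {c. c<N \<and> proj c (cz t) = Pt} = 1" by auto
    from rig[OF st] have cl1: "\<forall>c<N. proj c (cz (Suc t)) = [] \<or> proj c (cz (Suc t)) = W \<or> proj c (cz (Suc t)) = Pt"
      and cP1: "card {c. c<N \<and> proj c (cz (Suc t)) = Pt} = 1" by auto
    from cP0 obtain p where pP: "{c. c<N \<and> proj c (cz t) = Pt} = {p}" by (auto simp: card_1_singleton_iff)
    from cP1 obtain q where qP: "{c. c<N \<and> proj c (cz (Suc t)) = Pt} = {q}" by (auto simp: card_1_singleton_iff)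
    define cB where "cB = take (length Blk) (cz (Suc t))"
    have czS': "cz (Suc t) = cB @ cz t" and cBf: "map fst cB = Blk" using blk[OF st] cB_def by auto
    have pr: "proj c (cz (Suc t)) = proj c cB @ proj c (cz t)" for c using czS' by simp
    have cBb: "\<forall>x\<in>set cB. snd x < N" using czb[of "Suc t"] czS' by auto
    have p: "p < N" "proj p (cz t) = Pt" using pP by auto
    have q: "q < N" "proj q (cz (Suc t)) = Pt" using qP by auto
    have isP0: "c = p" if "c < N" "proj c (cz t) = Pt" for c
    proof -
      have "c \<in> {c. c<N \<and> proj c (cz t) = Pt}" using that by simp
      with pP show ?thesis by simp
    qed
    have isP1: "c = q" if "c < N" "proj c (cz (Suc t)) = Pt" for c
    proof -
      have "c \<in> {c. c<N \<and> proj c (cz (Suc t)) = Pt}" using that by simp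
      with qP show ?thesis by simp
    qed
    have nW: "proj c cB \<noteq> W" for c using noW[OF cBf[unfolded Blk_def]] .
    have ca: "proj c cB = []" if c: "c < N" "c \<noteq> p" "c \<noteq> q" for c
    proof -
      have t0: "proj c (cz t) = [] \<or> proj c (cz t) = W" using cl0 c isP0 by blast
      have t1: "proj c (cz (Suc t)) = [] \<or> proj c (cz (Suc t)) = W" using cl1 c isP1 by blast
      from t0 show ?thesis
      proof
        assume h: "proj c (cz t) = W"
        with t1 pr[of c] show ?thesis by auto
      next
        assume h: "proj c (cz t) = []"
        with t1 pr[of c] nW show ?thesis by simp
      qed
    qed
    have pq: "p \<noteq> q"
    proof
      assume pq: "p = q"
      then have "proj p cB @ Pt = Pt" using pr[of p] p q by simp
      then have pe: "proj p cB = []" by simp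
      have "cB \<noteq> []" using cBf by (auto simp: Blk_def)
      then obtain x where x: "x \<in> set cB" by (cases cB) auto
      then have "proj (snd x) cB \<noteq> []" by (rule proj_nonempty)
      moreover have "snd x < N" using cBb x by blast
      ultimately show False using ca pe pq by metis
    qed
    have pB: "proj p cB = replicate k a @ [b]"
    proof -
      have e1: "proj p (cz (Suc t)) = proj p cB @ Pt" using pr p by simp
      have e2: "proj p (cz (Suc t)) \<noteq> Pt" using isP1 pq p by auto
      have e3: "proj p (cz (Suc t)) \<noteq> []" using e1 W_ne by auto
      from cl1 p e2 e3 have "proj p (cz (Suc t)) = W" by blast
      with e1 have "proj p cB @ Pt = (replicate k a @ [b]) @ Pt" by (simp add: W_def Pt_def)
      then show ?thesis by simp
    qed
    have qB: "proj q cB = Pt"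
    proof -
      have "proj q (cz t) \<noteq> Pt" using isP0 pq q by auto
      then have h: "proj q (cz t) = [] \<or> proj q (cz t) = W" using cl0 q by blast
      have e: "proj q cB @ proj q (cz t) = Pt" using pr[of q] q by simp
      from h show ?thesis
      proof
        assume "proj q (cz t) = W"
        with e have "length Pt \<ge> length W" by (metis le_add2 length_append)
        with len_W_Pt show ?thesis by simp
      next
        assume "proj q (cz t) = []" with e show ?thesis by simp
      qed
    qed
    have two: "\<forall>x\<in>set cB. snd x = p \<or> snd x = q" using ca cBb proj_nonempty by blast
    note tc = two_color[OF two pq, of Q]
    have CpS: "Cp (cz (Suc t)) = Cp cB @ Cp (cz t)" using czS' by (simp add: Cp_def)
    from iv[unfolded inv_def] show "inv (Suc t)"
    proof
      assume out: "\<forall>c<N. proj c (cz t) \<noteq> [] \<longrightarrow> \<not> Q c"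
      have nQp: "\<not> Q p" using out p W_ne by auto
      have nQq: "\<not> Q q"
      proof
        assume "Q q"
        then have "Cp cB = Pt" using tc nQp qB by (simp add: Cp_def)
        then have "Cp (cz (Suc t)) = Pt" using CpS out_Cp[OF out] by simp
        with czS[of "Suc t"] s2 show False by metis
      qed
      have "\<forall>c<N. proj c (cz (Suc t)) \<noteq> [] \<longrightarrow> \<not> Q c"
      proof (intro allI impI)
        fix c assume c: "c < N" "proj c (cz (Suc t)) \<noteq> []"
        show "\<not> Q c"
        proof (cases "c = p \<or> c = q")
          case True then show ?thesis using nQp nQq by blast
        next
          case False
          then have "proj c cB = []" using ca c by blast
          then have "proj c (cz t) \<noteq> []" using pr[of c] c by simp
          then show ?thesis using out c by blast
        qed
      qed
      then show "inv (Suc t)" unfolding inv_def by blast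
    next
      assume inn: "(\<forall>c<N. proj c (cz t) \<noteq> [] \<longrightarrow> Q c) \<and> t < i"
      have Qp: "Q p" using inn p W_ne by auto
      have Qq: "Q q"
      proof (rule ccontr)
        assume "\<not> Q q"
        then have "Cp cB = replicate k a @ [b]" using tc Qp pB by (simp add: Cp_def)
        then have "Cp (cz (Suc t)) = replicate k a @ [b] @ Z t"
          using CpS in_Cp[OF inn[THEN conjunct1]] czf[OF t] by simp
        with czS[of "Suc t"] s3[OF inn[THEN conjunct2]] show False by metis
      qed
      have allin: "\<forall>c<N. proj c (cz (Suc t)) \<noteq> [] \<longrightarrow> Q c"
      proof (intro allI impI)
        fix c assume c: "c < N" "proj c (cz (Suc t)) \<noteq> []"
        show "Q c"
        proof (cases "c = p \<or> c = q")
          case True then show ?thesis using Qp Qq by blast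
        next
          case False
          then have "proj c cB = []" using ca c by blast
          then have "proj c (cz t) \<noteq> []" using pr[of c] c by simp
          then show ?thesis using inn c by blast
        qed
      qed
      have "Suc t < i"
      proof (rule ccontr)
        assume "\<not> Suc t < i"
        then have si: "Suc t = i" using inn by simp
        have "Cp (cz (Suc t)) = Z (Suc t)" using in_Cp[OF allin] czf[OF st] by simp
        with czS[of "Suc t"] s4[OF i1] si show False by metis
      qed
      with allin show "inv (Suc t)" unfolding inv_def by blast
    qed
  qed
  have all: "t < j \<Longrightarrow> inv t" for t
  proof (induction t)
    case 0 then show ?case using base by simp
  next
    case (Suc t) then show ?case using step by simp
  qed
  have jj: "j - 1 < j" using ij by simp
  have "inv (j-1)" using all[OF jj] .
  then have out: "\<forall>c<N. proj c (cz (j-1)) \<noteq> [] \<longrightarrow> \<not> Q c" using ij unfolding inv_def by auto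
  then have "Cp (cz (j-1)) = []" by (rule out_Cp)
  then have "SS i = Cp (take (L - length (Z (j-1))) cs)" using cp split[of "j-1"]
    unfolding Cp_def by (metis append_Nil2 filter_append map_append)
  then have "length (SS i) \<le> length (take (L - length (Z (j-1))) cs)"
    unfolding Cp_def by (metis length_filter_le length_map)
  also have "\<dots> \<le> L - length (Z (j-1))" by simp
  finally have le: "length (SS i) \<le> L - length (Z (j-1))" .
  obtain j' where j': "j = Suc j'" using ij by (cases j) auto
  obtain i' where i': "i = Suc i'" using i1 by (cases i) auto
  from le LS show False unfolding j' i' by (simp add: len_SS len_Z)
qed

definition Y where "Y t = replicate k a @ [b] @ Z t"

lemma il_star: "il v W u \<Longrightarrow> ins_star {W} [] v \<Longrightarrow> ins_star {W} [] u"
  using ins_step_il[of W v u] by (simp add: rtranclp.rtrancl_into_rtrancl)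

lemma Y0_in: "ins_star {W} [] (Y 0)"
proof -
  have h0: "ins_star {W} [] W" using il_star[OF il_Nil_left] by simp
  have "il (replicate m b) (W @ []) (W @ replicate m b)" by (rule il_app_r[OF il_Nil_right])
  then have "il ((replicate k a @ [b] @ replicate l a) @ replicate m b) W
     ((replicate k a @ [b] @ replicate l a) @ W @ replicate m b)" using il_app_l by fastforce
  then have "il W W (Y 0)" by (simp add: Y_def Z_def W_def)
  with h0 show ?thesis by (rule il_star[rotated])
qed

lemma Y_in: "ins_star {W} [] (Y t)"
proof (induction t)
  case 0 then show ?case by (rule Y0_in)
next
  case (Suc t)
  have "il (Z t) (replicate m b @ []) (replicate m b @ Z t)" by (rule il_app_r[OF il_Nil_right])
  then have "il ([b] @ Z t) (replicate m b) ([b] @ replicate m b @ Z t)" using il_app_l by fastforce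
  then have "il ([b] @ Z t) (replicate l a @ replicate m b) (replicate l a @ [b] @ replicate m b @ Z t)"
    by (rule il_app_r)
  then have "il (replicate k a @ [b] @ Z t) (replicate l a @ replicate m b)
      (replicate k a @ replicate l a @ [b] @ replicate m b @ Z t)" using il_app_l by fastforce
  then have "il (replicate k a @ [b] @ Z t) ((replicate k a @ [b]) @ replicate l a @ replicate m b)
      ((replicate k a @ [b]) @ replicate k a @ replicate l a @ [b] @ replicate m b @ Z t)"
    by (rule il_app_r)
  moreover have "(replicate k a @ [b]) @ replicate k a @ replicate l a @ [b] @ replicate m b @ Z t = Y (Suc t)"
    by (simp add: Y_def Z_Suc Blk_def replicate_add replicate_append_same)
  ultimately have "il (Y t) W (Y (Suc t))" by (simp add: Y_def W_def)
  with Suc show ?case by (rule il_star[rotated])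
qed

lemma SS_in: "ins_star {W} [] (SS n)"
proof -
  define rest where "rest = concat (replicate n M) @ W @ replicate m b"
  have "il rest (replicate m b @ []) (replicate m b @ rest)" by (rule il_app_r[OF il_Nil_right])
  then have "il ((replicate k a @ [b] @ replicate l a) @ rest) (replicate m b)
      ((replicate k a @ [b] @ replicate l a) @ replicate m b @ rest)" using il_app_l by fastforce
  then have "il ((replicate k a @ [b] @ replicate l a) @ rest) ((replicate k a @ [b] @ replicate l a) @ replicate m b)
      ((replicate k a @ [b] @ replicate l a) @ (replicate k a @ [b] @ replicate l a) @ replicate m b @ rest)"
    by (rule il_app_r)
  moreover have "(replicate k a @ [b] @ replicate l a) @ rest = Y n" by (simp add: Y_def Z_def rest_def)
  moreover have "(replicate k a @ [b] @ replicate l a) @ (replicate k a @ [b] @ replicate l a) @ replicate m b @ rest = SS n"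
    by (simp add: SS_def rest_def M_def W_def)
  ultimately have "il (Y n) W (SS n)" by (simp add: W_def)
  with Y_in show ?thesis by (rule il_star[rotated])
qed

end
theorem proposition3:
  fixes a b :: 'x and k l m :: nat
  assumes "a \<noteq> b" and "k > l" and "l \<ge> 1" and "m \<ge> 1"
  defines "w \<equiv> replicate k a @ [b] @ replicate l a @ replicate m b"
  defines "S \<equiv> (\<lambda>n::nat. replicate k a @ [b] @ replicate l a @
                 replicate k a @ [b] @ replicate l a @ replicate m b @
                 concat (replicate n (replicate k a @ replicate (m+1) b @ replicate l a)) @
                 replicate k a @ [b] @ replicate l a @ replicate m b @ replicate m b)"
  shows "(\<forall>n\<ge>1. S n \<in> lang_eps {w})
         \<and> (\<forall>i j. 1 \<le> i \<longrightarrow> i < j \<longrightarrow> \<not> ins_star {w} (S i) (S j))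
         \<and> \<not> wqo_on_set (ins_star {w}) (lang_eps {w})"
proof -
  interpret P: P3 a b k l m using assms(1-4) by unfold_locales auto
  have wW: "w = P.W" by (simp add: w_def P.W_def)
  have SS: "S n = P.SS n" for n by (simp add: S_def P.SS_def)
  have inL: "S n \<in> lang_eps {w}" for n
    using P.SS_in[of n] by (simp add: lang_eps_def wW SS)
  have nle: "\<not> ins_star {w} (S i) (S j)" if ij: "1 \<le> i" "i < j" for i j
  proof
    assume h: "ins_star {w} (S i) (S j)"
    from star_decomp[OF h] obtain x where x: "ins_star {w} [] x" "il (S i) x (S j)" by blast
    from L_colored[OF inL[of i, unfolded lang_eps_def mem_Collect_eq]] obtain N1 c1
      where c1: "map fst c1 = S i" "colored w N1 c1" by blast
    from L_colored[OF x(1)] obtain N2 c2 where c2: "map fst c2 = x" "colored w N2 c2" by blast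
    from combine_col[OF x(2) c1 c2] obtain cs where
      cs: "map fst cs = S j" "colored w (N1+N2) cs" "map fst (filter (\<lambda>p. snd p < N1) cs) = S i" by blast
    have A: "map fst cs = P.SS j" using cs(1) SS by simp
    have B: "colored P.W (N1+N2) cs" using cs(2) wW by simp
    have C: "map fst (filter (\<lambda>p. snd p < N1) cs) = P.SS i" using cs(3) SS by simp
    show False by (rule P.main[OF ij A B C])
  qed
  have nw: "\<not> wqo_on_set (ins_star {w}) (lang_eps {w})"
    unfolding wqo_on_set_def
  proof
    assume h: "\<forall>s::nat \<Rightarrow> 'x list. (\<forall>n. s n \<in> lang_eps {w}) \<longrightarrow> (\<exists>i j. i < j \<and> ins_star {w} (s i) (s j))"
    have imp: "(\<forall>n. S (n+1) \<in> lang_eps {w}) \<longrightarrow> (\<exists>i j. i < j \<and> ins_star {w} (S (i+1)) (S (j+1)))"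
      using spec[OF h, of "\<lambda>n. S (n+1)"] .
    have "\<forall>n. S (n+1) \<in> lang_eps {w}" using inL by (intro allI)
    with imp obtain i j where ij: "i < j" "ins_star {w} (S (i+1)) (S (j+1))" by blast
    have "1 \<le> i+1" "i+1 < j+1" using ij(1) by simp_all
    from nle[OF this] ij(2) show False by contradiction
  qed
  have p1: "\<forall>n\<ge>1. S n \<in> lang_eps {w}" using inL by blast
  have p2: "\<forall>i j. 1 \<le> i \<longrightarrow> i < j \<longrightarrow> \<not> ins_star {w} (S i) (S j)" using nle by blast
  from p1 p2 nw show ?thesis by (intro conjI)
qed

end
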